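(* Let $N\ge1$, $\gamma_1,\dots,\gamma_N>0$, and let $G$ be an $N\times N$ complex Hermitian matrix. Set $\Gamma=\mathrm{diag}(\gamma_1,\dots,\gamma_N,\gamma_1,\dots,\gamma_N)$, $$\mathcal{M}_{\mathrm{IME}}=\begin{pmatrix}\mathrm{Im}[G] & \mathrm{Re}[G]\\ -\mathrm{Re}[G] & -\mathrm{Im}[G]^{\mathrm T}\end{pmatrix},\qquad S_{\mathrm{IME}}(\omega)=\sqrt{2\Gamma}\,(\mathrm{i}\omega\mathbb{I}+\Gamma-\mathcal{M}_{\mathrm{IME}})^{-1}\sqrt{2\Gamma}-\mathbb{I},$$ and $L=\frac{1}{\sqrt2}\begin{pmatrix}I & I\\ -\mathrm{i}I & \mathrm{i}I\end{pmatrix}$, where $I$ and $\mathbb{I}$ are the $N\times N$ and $2N\times 2N$ identities. Then $\mathrm{i}\omega\mathbb{I}+\Gamma-\mathcal{M}_{\mathrm{IME}}$ is invertible for all $\omega\in\mathbb{R}$, and there is an $N\times N$ matrix-valued function $U_{\mathrm{IME}}(\omega)$ such that for all $\omega\in\mathbb{R}$ $$L^\dagger S_{\mathrm{IME}}(\omega)L=\begin{pmatrix}U_{\mathrm{IME}}(\omega) & 0\\ 0 & U_{\mathrm{IME}}(-\omega)^*\end{pmatrix},$$ and $U_{\mathrm{IME}}(\omega)$ is unitary for every $\omega\in\mathbb{R}$.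
   Context: $\mathrm{Re}$, $\mathrm{Im}$ are entrywise; ${}^*$ denotes entrywise complex conjugation and ${}^\dagger$ conjugate transpose; $\sqrt{2\Gamma}$ is the entrywise square root of the diagonal matrix $2\Gamma$. *)

theory Defs
  imports "HOL-Analysis.Analysis"
begin

text \<open>Complex matrices with type-indexed dimensions: an N x N matrix is
  complex^'n^'n, a 2N x 2N matrix is complex^('n+'n)^('n+'n), where the
  index Inl k stands for k and Inr k for N+k.\<close>

definition cconj :: "complex^'m^'n \<Rightarrow> complex^'m^'n" where
  "cconj A = (\<chi> i j. cnj (A$i$j))"

definition cadjoint :: "complex^'m^'n \<Rightarrow> complex^'n^'m" where
  "cadjoint A = (\<chi> i j. cnj (A$j$i))"

definition hermitian :: "complex^'n^'n \<Rightarrow> bool" where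
  "hermitian A \<longleftrightarrow> cadjoint A = A"

definition unitary :: "complex^'n^'n \<Rightarrow> bool" where
  "unitary U \<longleftrightarrow> cadjoint U ** U = mat 1 \<and> U ** cadjoint U = mat 1"

definition re_part :: "complex^'m^'n \<Rightarrow> complex^'m^'n" where
  "re_part A = (\<chi> i j. complex_of_real (Re (A$i$j)))"

definition im_part :: "complex^'m^'n \<Rightarrow> complex^'m^'n" where
  "im_part A = (\<chi> i j. complex_of_real (Im (A$i$j)))"

definition block_mat ::
  "'a^'n^'n \<Rightarrow> 'a^'n^'n \<Rightarrow> 'a^'n^'n \<Rightarrow> 'a^'n^'n \<Rightarrow> 'a^('n+'n)^('n+'n)" where
  "block_mat A B C D = (\<chi> i j. case (i, j) of
      (Inl k, Inl l) \<Rightarrow> A$k$l | (Inl k, Inr l) \<Rightarrow> B$k$l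
    | (Inr k, Inl l) \<Rightarrow> C$k$l | (Inr k, Inr l) \<Rightarrow> D$k$l)"

definition idx_base :: "'n + 'n \<Rightarrow> 'n" where
  "idx_base i = (case i of Inl k \<Rightarrow> k | Inr k \<Rightarrow> k)"

definition Gamma_mat :: "('n::finite \<Rightarrow> real) \<Rightarrow> complex^('n+'n)^('n+'n)" where
  "Gamma_mat \<gamma> = (\<chi> i j. if i = j then complex_of_real (\<gamma> (idx_base i)) else 0)"

definition sqrt2Gamma :: "('n::finite \<Rightarrow> real) \<Rightarrow> complex^('n+'n)^('n+'n)" where
  "sqrt2Gamma \<gamma> = (\<chi> i j. if i = j then complex_of_real (sqrt (2 * \<gamma> (idx_base i))) else 0)"

definition M_IME :: "complex^'n::finite^'n \<Rightarrow> complex^('n+'n)^('n+'n)" where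
  "M_IME G = block_mat (im_part G) (re_part G) (- re_part G) (- transpose (im_part G))"

definition S_IME :: "('n::finite \<Rightarrow> real) \<Rightarrow> complex^'n^'n \<Rightarrow> real \<Rightarrow> complex^('n+'n)^('n+'n)" where
  "S_IME \<gamma> G \<omega> = sqrt2Gamma \<gamma>
      ** matrix_inv (mat (\<i> * complex_of_real \<omega>) + Gamma_mat \<gamma> - M_IME G)
      ** sqrt2Gamma \<gamma> - mat 1"

definition L_mat :: "complex^('n::finite+'n)^('n+'n)" where
  "L_mat = (let s = 1 / complex_of_real (sqrt 2) in
     block_mat (mat s) (mat s) (mat (- \<i> * s)) (mat (\<i> * s)))"

end

theory Submission imports Defs begin

lemma mm_radd: "((A::'a::semiring_1^'n^'m) + B) ** C = A ** C + B ** C"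
  by (simp add: matrix_matrix_mult_def vec_eq_iff sum.distrib distrib_right)
lemma mm_rsub: "((A::'a::ring_1^'n^'m) - B) ** C = A ** C - B ** C"
  by (simp add: matrix_matrix_mult_def vec_eq_iff sum_subtractf left_diff_distrib)
lemma mm_lsub: "(A::'a::ring_1^'n^'m) ** (B - C) = A ** B - A ** C"
  by (simp add: matrix_matrix_mult_def vec_eq_iff sum_subtractf right_diff_distrib)
lemma mm_rneg: "(- (A::'a::ring_1^'n^'m)) ** C = - (A ** C)"
  by (simp add: matrix_matrix_mult_def vec_eq_iff sum_negf)
lemma mm_lneg: "(A::'a::ring_1^'n^'m) ** (- C) = - (A ** C)"
  by (simp add: matrix_matrix_mult_def vec_eq_iff sum_negf)

lemma sum_UNIV_Plus: "sum g (UNIV :: ('a::finite + 'b::finite) set) = sum (\<lambda>k. g (Inl k)) UNIV + sum (\<lambda>k. g (Inr k)) UNIV"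
  by (subst UNIV_Plus_UNIV[symmetric], subst sum.Plus) (auto simp: o_def)

lemma block_nth:
  "block_mat A B C D $ Inl k $ Inl l = A$k$l"
  "block_mat A B C D $ Inl k $ Inr l = B$k$l"
  "block_mat A B C D $ Inr k $ Inl l = C$k$l"
  "block_mat A B C D $ Inr k $ Inr l = D$k$l"
  by (simp_all add: block_mat_def)

lemma block_eqI:
  fixes X :: "'a^('n::finite+'n)^('n+'n)"
  assumes "\<And>k l. X $ Inl k $ Inl l = Y $ Inl k $ Inl l"
    "\<And>k l. X $ Inl k $ Inr l = Y $ Inl k $ Inr l"
    "\<And>k l. X $ Inr k $ Inl l = Y $ Inr k $ Inl l"
    "\<And>k l. X $ Inr k $ Inr l = Y $ Inr k $ Inr l"
  shows "X = Y"
  unfolding vec_eq_iff by (metis assms sum.exhaust)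

lemma block_mult:
  fixes A B C D E F G H :: "'a::semiring_1^'n::finite^'n"
  shows "block_mat A B C D ** block_mat E F G H =
    block_mat (A**E + B**G) (A**F + B**H) (C**E+D**G) (C**F+D**H)"
  by (rule block_eqI) (simp_all add: matrix_matrix_mult_def sum_UNIV_Plus block_nth)

lemma block_add: "block_mat A B C D + block_mat E F G H = block_mat (A+E) (B+F) (C+G) (D+H)"
  by (rule block_eqI) (simp_all add: block_nth)
lemma block_diff: "block_mat A B C D - block_mat E F G H = block_mat (A-E) (B-F) (C-G) (D-H)"
  by (rule block_eqI) (simp_all add: block_nth)
lemma block_neg: "- block_mat A B C D = block_mat (-A) (-B) (-C) (-D)"
  by (rule block_eqI) (simp_all add: block_nth)
lemma block_mat_c: "(mat c :: 'a::zero^('n::finite+'n)^('n+'n)) = block_mat (mat c) 0 0 (mat c)"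
  by (rule block_eqI) (simp_all add: block_nth mat_def)
lemma block_cadj: "cadjoint (block_mat A B C D) = block_mat (cadjoint A) (cadjoint C) (cadjoint B) (cadjoint D)"
  by (rule block_eqI) (simp_all add: block_nth cadjoint_def)
lemma block_cconj: "cconj (block_mat A B C D) = block_mat (cconj A) (cconj B) (cconj C) (cconj D)"
  by (rule block_eqI) (simp_all add: block_nth cconj_def)


lemma cadj_mult: "cadjoint ((A::complex^'n::finite^'m::finite) ** (B::complex^'p::finite^'n)) = cadjoint B ** cadjoint A"
  by (simp add: cadjoint_def matrix_matrix_mult_def vec_eq_iff mult.commute)
lemma cadj_add: "cadjoint (A + B) = cadjoint A + cadjoint B"
  by (simp add: cadjoint_def vec_eq_iff)
lemma cadj_diff: "cadjoint (A - B) = cadjoint A - cadjoint B"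
  by (simp add: cadjoint_def vec_eq_iff)
lemma cadj_mat: "cadjoint (mat c :: complex^'n^'n) = mat (cnj c)"
  by (simp add: cadjoint_def vec_eq_iff mat_def)
lemma cadj_cadj: "cadjoint (cadjoint A) = A"
  by (simp add: cadjoint_def vec_eq_iff)
lemma cconj_mult: "cconj ((A::complex^'n::finite^'m::finite) ** (B::complex^'p::finite^'n)) = cconj A ** cconj B"
  by (simp add: cconj_def matrix_matrix_mult_def vec_eq_iff)
lemma cconj_add: "cconj (A + B) = cconj A + cconj B"
  by (simp add: cconj_def vec_eq_iff)
lemma cconj_diff: "cconj (A - B) = cconj A - cconj B"
  by (simp add: cconj_def vec_eq_iff)
lemma cconj_mat: "cconj (mat c :: complex^'n^'n) = mat (cnj c)"
  by (simp add: cconj_def vec_eq_iff mat_def)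

lemma inv_unique:
  fixes A B :: "'a::field^'n::finite^'n"
  assumes "A ** B = mat 1"
  shows "matrix_inv A = B" "invertible A"
proof -
  have BA: "B ** A = mat 1" using assms matrix_left_right_inverse by blast
  have ex: "\<exists>A'. A ** A' = mat 1 \<and> A' ** A = mat 1" using assms BA by blast
  then have P: "A ** matrix_inv A = mat 1 \<and> matrix_inv A ** A = mat 1"
    unfolding matrix_inv_def by (rule someI_ex)
  have "matrix_inv A = matrix_inv A ** (A ** B)" using assms by simp
  also have "\<dots> = B" using P by (simp add: matrix_mul_assoc)
  finally show "matrix_inv A = B" .
  show "invertible A" using ex invertible_def by blast
qed

lemma inv_props:
  fixes A :: "'a::field^'n::finite^'n"
  assumes "invertible A"
  shows "A ** matrix_inv A = mat 1" "matrix_inv A ** A = mat 1"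
proof -
  have ex: "\<exists>A'. A ** A' = mat 1 \<and> A' ** A = mat 1" using assms invertible_def by blast
  then have P: "A ** matrix_inv A = mat 1 \<and> matrix_inv A ** A = mat 1"
    unfolding matrix_inv_def by (rule someI_ex)
  then show "A ** matrix_inv A = mat 1" "matrix_inv A ** A = mat 1" by auto
qed

lemma cnj_d_sq: "cnj z * (complex_of_real d * z) = complex_of_real (d * (cmod z)^2)"
proof -
  have h: "z * cnj z = complex_of_real ((cmod z)^2)" by (simp only: complex_mult_cnj cmod_power2)
  have "cnj z * (complex_of_real d * z) = complex_of_real d * (z * cnj z)" by (simp add: ac_simps)
  also have "\<dots> = complex_of_real (d * (cmod z)^2)" by (simp only: h of_real_mult)
  finally show ?thesis .
qed

definition qf :: "complex^'n::finite^'n \<Rightarrow> complex^'n \<Rightarrow> complex" where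
  "qf A x = (\<Sum>i\<in>UNIV. cnj (x$i) * (A *v x)$i)"

lemma qf_add: "qf (A + B) x = qf A x + qf B x"
  by (simp add: qf_def matrix_vector_mult_def sum.distrib distrib_left distrib_right)

lemma qf_cadj: "qf (cadjoint A) x = cnj (qf A x)"
  unfolding qf_def matrix_vector_mult_def cadjoint_def
  apply (simp add: sum_distrib_left)
  apply (subst sum.swap)
  apply (simp add: mult_ac)
  done

lemma posdef_invertible:
  fixes K :: "complex^'n::finite^'n" and d :: "'n \<Rightarrow> real"
  assumes "K + cadjoint K = (\<chi> i j. if i = j then complex_of_real (d i) else 0)"
    and "\<And>i. d i > 0"
  shows "invertible K"
proof -
  have "\<forall>x. K *v x = 0 \<longrightarrow> x = 0"
  proof (intro allI impI)
    fix x assume Kx: "K *v x = 0"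
    have "qf K x = 0" using Kx by (simp add: qf_def)
    hence "qf (K + cadjoint K) x = 0" by (simp add: qf_add qf_cadj)
    moreover have "qf (K + cadjoint K) x = (\<Sum>i\<in>UNIV. complex_of_real (d i * (cmod (x$i))^2))"
    proof -
      have e: "\<And>i. cnj (x $ i) * (complex_of_real (d i) * x $ i) = complex_of_real (d i * (cmod (x$i))^2)"
        by (rule cnj_d_sq)
      have "qf (K + cadjoint K) x = (\<Sum>i\<in>UNIV. cnj (x $ i) * (complex_of_real (d i) * x $ i))"
        unfolding assms(1) qf_def matrix_vector_mult_def
        by (simp add: if_distrib if_distribR sum.delta cong: if_cong)
      also have "\<dots> = (\<Sum>i\<in>UNIV. complex_of_real (d i * (cmod (x$i))^2))"
        by (rule sum.cong[OF refl]) (rule e)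
      finally show ?thesis .
    qed
    ultimately have "(\<Sum>i\<in>UNIV. complex_of_real (d i * (cmod (x$i))^2)) = 0"
      by simp
    hence s: "(\<Sum>i\<in>UNIV. d i * (cmod (x$i))^2) = 0"
      by (simp only: of_real_sum[symmetric] of_real_eq_0_iff)
    have "\<forall>i\<in>UNIV. d i * (cmod (x$i))^2 = 0"
      using s by (subst sum_nonneg_eq_0_iff[symmetric]) (auto simp: less_imp_le[OF assms(2)])
    then show "x = 0" using assms(2) by (auto simp add: vec_eq_iff) (metis less_irrefl)
  qed
  then have "\<exists>B. B ** K = mat 1" using matrix_left_invertible_ker by blast
  then show ?thesis using invertible_left_inverse by blast
qed

lemma unitary_form:
  fixes K w :: "complex^'n::finite^'n"
  assumes "invertible K" "cadjoint w = w" "w ** w = K + cadjoint K"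
  shows "unitary (w ** matrix_inv K ** w - mat 1)"
proof -
  define P where "P = matrix_inv K"
  define Q where "Q = cadjoint P"
  have KP: "K ** P = mat 1" and PK: "P ** K = mat 1" using inv_props[OF assms(1)] P_def by auto
  have QK: "Q ** cadjoint K = mat 1" unfolding Q_def using cadj_mult[of K P] KP by (simp add: cadj_mat)
  have KQ: "cadjoint K ** Q = mat 1" unfolding Q_def using cadj_mult[of P K] PK by (simp add: cadj_mat)
  have adj: "cadjoint (w ** P ** w - mat 1) = w ** Q ** w - mat 1"
    by (simp add: cadj_diff cadj_mult cadj_mat assms(2) Q_def matrix_mul_assoc)
  have e1: "Q ** (w ** w) ** P = Q + P"
    by (simp add: assms(3) matrix_add_ldistrib mm_radd matrix_mul_assoc[symmetric] KP)
       (simp add: matrix_mul_assoc QK)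
  have e2: "P ** (w ** w) ** Q = P + Q"
    by (simp add: assms(3) matrix_add_ldistrib mm_radd matrix_mul_assoc[symmetric] KQ)
       (simp add: matrix_mul_assoc PK)
  have "(w ** Q ** w - mat 1) ** (w ** P ** w - mat 1) = w ** (Q ** (w ** w) ** P) ** w - w ** Q ** w - w ** P ** w + mat 1"
    by (simp add: mm_rsub mm_lsub matrix_mul_assoc algebra_simps)
  also have "\<dots> = mat 1" by (simp add: e1 matrix_add_ldistrib mm_radd)
  finally have 1: "(w ** Q ** w - mat 1) ** (w ** P ** w - mat 1) = mat 1" .
  have "(w ** P ** w - mat 1) ** (w ** Q ** w - mat 1) = w ** (P ** (w ** w) ** Q) ** w - w ** P ** w - w ** Q ** w + mat 1"
    by (simp add: mm_rsub mm_lsub matrix_mul_assoc algebra_simps)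
  also have "\<dots> = mat 1" by (simp add: e2 matrix_add_ldistrib mm_radd)
  finally have 2: "(w ** P ** w - mat 1) ** (w ** Q ** w - mat 1) = mat 1" .
  show ?thesis unfolding unitary_def P_def[symmetric] adj using 1 2 by simp
qed


definition diag :: "('n::finite \<Rightarrow> complex) \<Rightarrow> complex^'n^'n" where
  "diag f = (\<chi> i j. if i = j then f i else 0)"

lemma mat_diag: "mat c = diag (\<lambda>_. c)" by (simp add: mat_def diag_def)

lemma mm_diag_r: "A ** diag f = (\<chi> i j. A$i$j * f j)"
  by (simp add: matrix_matrix_mult_def diag_def vec_eq_iff if_distrib if_distribR sum.delta' cong: if_cong)
lemma mm_diag_l: "diag f ** A = (\<chi> i j. f i * A$i$j)"
  by (simp add: matrix_matrix_mult_def diag_def vec_eq_iff if_distrib if_distribR sum.delta cong: if_cong)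

lemma herm_entry: assumes "hermitian G" shows "G$l$k = cnj (G$k$l)"
proof -
  have "cadjoint G $k$l = G$k$l" using assms by (simp add: hermitian_def)
  hence "cnj (G$l$k) = G$k$l" by (simp add: cadjoint_def)
  thus ?thesis by (metis complex_cnj_cnj)
qed

definition Kp :: "('n::finite \<Rightarrow> real) \<Rightarrow> complex^'n^'n \<Rightarrow> real \<Rightarrow> complex^'n^'n" where
  "Kp \<gamma> G \<omega> = (\<chi> i j. (if i = j then \<i> * complex_of_real \<omega> + complex_of_real (\<gamma> i) else 0) + \<i> * G$i$j)"
definition Km :: "('n::finite \<Rightarrow> real) \<Rightarrow> complex^'n^'n \<Rightarrow> real \<Rightarrow> complex^'n^'n" where
  "Km \<gamma> G \<omega> = (\<chi> i j. (if i = j then \<i> * complex_of_real \<omega> + complex_of_real (\<gamma> i) else 0) - \<i> * cnj (G$i$j))"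
definition wm :: "('n::finite \<Rightarrow> real) \<Rightarrow> complex^'n^'n" where
  "wm \<gamma> = diag (\<lambda>i. complex_of_real (sqrt (2 * \<gamma> i)))"
definition Dg :: "('n::finite \<Rightarrow> real) \<Rightarrow> complex^'n^'n" where
  "Dg \<gamma> = diag (\<lambda>i. complex_of_real (\<gamma> i))"

lemma Gamma_block: "Gamma_mat \<gamma> = block_mat (Dg \<gamma>) 0 0 (Dg \<gamma>)"
  by (rule block_eqI) (simp_all add: block_nth Gamma_mat_def Dg_def diag_def idx_base_def)
lemma sqrt2Gamma_block: "sqrt2Gamma \<gamma> = block_mat (wm \<gamma>) 0 0 (wm \<gamma>)"
  by (rule block_eqI) (simp_all add: block_nth sqrt2Gamma_def wm_def diag_def idx_base_def)

definition sr :: complex where "sr = complex_of_real (1 / sqrt 2)"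

lemma L_block: "L_mat = block_mat (diag (\<lambda>_. sr)) (diag (\<lambda>_. sr)) (diag (\<lambda>_. - \<i> * sr)) (diag (\<lambda>_. \<i> * sr))"
  by (simp add: L_mat_def Let_def sr_def mat_diag of_real_divide)

lemma sr_sq: "sr * sr = 1/2"
  by (simp add: sr_def flip: of_real_mult) 

lemma cnj_sr: "cnj sr = sr" by (simp add: sr_def)

lemma cadj_diag: "cadjoint (diag f) = diag (\<lambda>i. cnj (f i))"
  by (simp add: cadjoint_def diag_def vec_eq_iff)

lemma diag_mult: "diag f ** diag g = diag (\<lambda>i. f i * g i)"
  by (simp add: mm_diag_r) (simp add: diag_def vec_eq_iff)
lemma diag_add: "diag f + diag g = diag (\<lambda>i. f i + g i)"
  by (simp add: diag_def vec_eq_iff)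
lemma diag_zero: "diag (\<lambda>_. 0) = 0"
  by (simp add: diag_def vec_eq_iff)

lemma L_unitary: "cadjoint L_mat ** L_mat = mat 1" "L_mat ** cadjoint L_mat = mat 1"
proof -
  have a: "sr * (sr * c) = c / 2" for c using sr_sq by (metis mult.assoc mult.commute times_divide_eq_right mult_1_right)
  show "cadjoint L_mat ** L_mat = mat 1" "L_mat ** cadjoint L_mat = mat 1"
    unfolding L_block block_cadj cadj_diag block_mult block_mat_c mat_diag diag_mult diag_add
    by (simp_all add: cnj_sr algebra_simps a diag_zero)
qed


lemma mmadd_l: "(A::'a::semiring_1^'n^'m) ** B + A ** C = A ** (B + C)" by (simp add: matrix_add_ldistrib)

definition Xm where "Xm \<gamma> G \<omega> = mat (\<i> * complex_of_real \<omega>) + Gamma_mat \<gamma> - M_IME G"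

lemma X_block: "Xm \<gamma> G \<omega> = block_mat (mat (\<i> * complex_of_real \<omega>) + Dg \<gamma> - im_part G) (- re_part G)
   (re_part G) (mat (\<i> * complex_of_real \<omega>) + Dg \<gamma> + transpose (im_part G))"
  unfolding Xm_def M_IME_def Gamma_block block_mat_c[of "\<i> * complex_of_real \<omega>"] block_add block_diff
  by simp

lemma im_transpose: assumes "hermitian G" shows "transpose (im_part G) = - im_part G"
  unfolding vec_eq_iff
proof (intro allI)
  fix i j
  have "G$j$i = cnj (G$i$j)" by (rule herm_entry[OF assms])
  thus "transpose (im_part G) $ i $ j = (- im_part G) $ i $ j" by (simp add: transpose_def im_part_def)
qed

lemma XL: assumes "hermitian G"
  shows "Xm \<gamma> G \<omega> ** L_mat = L_mat ** block_mat (Kp \<gamma> G \<omega>) 0 0 (Km \<gamma> G \<omega>)"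
  unfolding X_block L_block block_mult im_transpose[OF assms]
  apply (rule block_eqI)
  apply (simp_all only: block_nth mm_diag_r mm_diag_l vec_lambda_beta)
  apply (simp_all add: mat_def Dg_def diag_def im_part_def re_part_def Kp_def Km_def)
  apply (simp_all add: complex_eq_iff algebra_simps)
  done

lemma WL: "sqrt2Gamma \<gamma> ** L_mat = L_mat ** sqrt2Gamma \<gamma>"
  unfolding sqrt2Gamma_block L_block block_mult wm_def diag_mult
  by (simp add: mult.commute)

lemma Kp_herm: assumes "hermitian G"
  shows "Kp \<gamma> G \<omega> + cadjoint (Kp \<gamma> G \<omega>) = (\<chi> i j. if i = j then complex_of_real (2 * \<gamma> i) else 0)"
  unfolding vec_eq_iff
proof (intro allI)
  fix i j
  have "G$j$i = cnj (G$i$j)" by (rule herm_entry[OF assms])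
  thus "(Kp \<gamma> G \<omega> + cadjoint (Kp \<gamma> G \<omega>)) $ i $ j = (\<chi> i j. if i = j then complex_of_real (2 * \<gamma> i) else 0) $ i $ j"
    by (simp add: Kp_def cadjoint_def complex_eq_iff)
qed

lemma Km_herm: assumes "hermitian G"
  shows "Km \<gamma> G \<omega> + cadjoint (Km \<gamma> G \<omega>) = (\<chi> i j. if i = j then complex_of_real (2 * \<gamma> i) else 0)"
  unfolding vec_eq_iff
proof (intro allI)
  fix i j
  have "G$j$i = cnj (G$i$j)" by (rule herm_entry[OF assms])
  thus "(Km \<gamma> G \<omega> + cadjoint (Km \<gamma> G \<omega>)) $ i $ j = (\<chi> i j. if i = j then complex_of_real (2 * \<gamma> i) else 0) $ i $ j"
    by (simp add: Km_def cadjoint_def complex_eq_iff)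
qed

lemma ww: assumes "\<And>k. \<gamma> k > 0"
  shows "wm \<gamma> ** wm \<gamma> = (\<chi> i j. if i = j then complex_of_real (2 * \<gamma> i) else 0)"
  unfolding wm_def diag_mult 
  by (simp add: diag_def vec_eq_iff less_imp_le[OF assms] flip: of_real_mult)

lemma cadj_zero: "cadjoint 0 = 0" by (simp add: cadjoint_def vec_eq_iff)
lemma cadj_wm: "cadjoint (wm \<gamma>) = wm \<gamma>"
  by (simp add: wm_def cadj_diag)
lemma cconj_wm: "cconj (wm \<gamma>) = wm \<gamma>"
  by (simp add: wm_def cconj_def diag_def vec_eq_iff)
lemma cconj_Kp: "cconj (Kp \<gamma> G (- \<omega>)) = Km \<gamma> G \<omega>"
  by (simp add: Kp_def Km_def cconj_def vec_eq_iff)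

theorem mainTheorem4:
  fixes \<gamma> :: "'n::finite \<Rightarrow> real" and G :: "complex^'n^'n"
  assumes "\<And>k. \<gamma> k > 0"
    and "hermitian G"
  shows "(\<forall>\<omega>::real. invertible (mat (\<i> * complex_of_real \<omega>) + Gamma_mat \<gamma> - M_IME G))
    \<and> (\<exists>U :: real \<Rightarrow> complex^'n^'n.
          \<forall>\<omega>::real. cadjoint L_mat ** S_IME \<gamma> G \<omega> ** L_mat
                        = block_mat (U \<omega>) 0 0 (cconj (U (- \<omega>)))
                    \<and> unitary (U \<omega>))"
proof -
  have pos2: "\<And>k. 2 * \<gamma> k > 0" using assms(1) by simp
  have invKp: "invertible (Kp \<gamma> G \<omega>)" for \<omega>
    by (rule posdef_invertible[OF Kp_herm[OF assms(2)] pos2])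
  have invKm: "invertible (Km \<gamma> G \<omega>)" for \<omega>
    by (rule posdef_invertible[OF Km_herm[OF assms(2)] pos2])
  define L :: "complex^('n+'n)^('n+'n)" where "L = L_mat"
  define La where "La = cadjoint L"
  define W where "W = sqrt2Gamma \<gamma>"
  have LaL: "La ** L = mat 1" and LLa: "L ** La = mat 1" using L_unitary by (simp_all add: L_def La_def)
  have cW: "cadjoint W = W" by (simp add: W_def sqrt2Gamma_block block_cadj cadj_wm cadj_zero)
  have WL': "W ** L = L ** W" using WL by (simp add: W_def L_def)
  have LaW: "La ** W = W ** La"
    using arg_cong[OF WL', of cadjoint] by (simp add: cadj_mult cW La_def)
  have main: "invertible (Xm \<gamma> G \<omega>) \<and> La ** S_IME \<gamma> G \<omega> ** L
      = block_mat (wm \<gamma> ** matrix_inv (Kp \<gamma> G \<omega>) ** wm \<gamma> - mat 1) 0 0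
                  (wm \<gamma> ** matrix_inv (Km \<gamma> G \<omega>) ** wm \<gamma> - mat 1)" for \<omega>
  proof -
    define Bm where "Bm = block_mat (Kp \<gamma> G \<omega>) 0 0 (Km \<gamma> G \<omega>)"
    define Bi where "Bi = block_mat (matrix_inv (Kp \<gamma> G \<omega>)) 0 0 (matrix_inv (Km \<gamma> G \<omega>))"
    have BBi: "Bm ** Bi = mat 1"
      unfolding Bm_def Bi_def block_mult block_mat_c[of 1]
      by (simp add: inv_props[OF invKp] inv_props[OF invKm])
    have X: "Xm \<gamma> G \<omega> = L ** Bm ** La"
    proof -
      have "Xm \<gamma> G \<omega> = Xm \<gamma> G \<omega> ** (L ** La)" by (simp add: LLa)
      also have "\<dots> = (Xm \<gamma> G \<omega> ** L) ** La" by (simp add: matrix_mul_assoc)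
      also have "\<dots> = L ** Bm ** La" using XL[OF assms(2)] by (simp add: L_def Bm_def)
      finally show ?thesis .
    qed
    define Y where "Y = L ** Bi ** La"
    have XY: "Xm \<gamma> G \<omega> ** Y = mat 1"
    proof -
      have "Xm \<gamma> G \<omega> ** Y = L ** Bm ** (La ** L) ** Bi ** La"
        by (simp add: X Y_def matrix_mul_assoc)
      also have "\<dots> = L ** (Bm ** Bi) ** La" by (simp add: LaL matrix_mul_assoc)
      also have "\<dots> = mat 1" by (simp add: BBi LLa)
      finally show ?thesis .
    qed
    have iX: "matrix_inv (Xm \<gamma> G \<omega>) = Y" and invX: "invertible (Xm \<gamma> G \<omega>)"
      using inv_unique[OF XY] by auto
    have S: "S_IME \<gamma> G \<omega> = W ** Y ** W - mat 1"
      using iX by (simp add: S_IME_def Xm_def W_def)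
    have "La ** (W ** Y ** W) ** L = (La ** W) ** L ** Bi ** (La ** W) ** L"
      by (simp only: Y_def matrix_mul_assoc)
    also have "\<dots> = (W ** La) ** L ** Bi ** (W ** La) ** L" by (simp only: LaW)
    also have "\<dots> = W ** (La ** L) ** Bi ** W ** (La ** L)" by (simp only: matrix_mul_assoc)
    also have "\<dots> = W ** Bi ** W" by (simp add: LaL)
    finally have e: "La ** (W ** Y ** W) ** L = W ** Bi ** W" .
    have "La ** S_IME \<gamma> G \<omega> ** L = W ** Bi ** W - mat 1"
      unfolding S mm_lsub mm_rsub e by (simp add: LaL)
    also have "\<dots> = block_mat (wm \<gamma> ** matrix_inv (Kp \<gamma> G \<omega>) ** wm \<gamma> - mat 1) 0 0
                  (wm \<gamma> ** matrix_inv (Km \<gamma> G \<omega>) ** wm \<gamma> - mat 1)"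
      unfolding W_def Bi_def sqrt2Gamma_block block_mult block_mat_c[of 1] block_diff by simp
    finally show ?thesis using invX by simp
  qed
  define U where "U \<omega> = wm \<gamma> ** matrix_inv (Kp \<gamma> G \<omega>) ** wm \<gamma> - mat 1" for \<omega>
  have cU: "cconj (U (- \<omega>)) = wm \<gamma> ** matrix_inv (Km \<gamma> G \<omega>) ** wm \<gamma> - mat 1" for \<omega>
  proof -
    have "Km \<gamma> G \<omega> ** cconj (matrix_inv (Kp \<gamma> G (- \<omega>))) = mat 1"
      by (simp add: cconj_Kp[symmetric] cconj_mult[symmetric] inv_props[OF invKp] cconj_mat)
    hence "matrix_inv (Km \<gamma> G \<omega>) = cconj (matrix_inv (Kp \<gamma> G (- \<omega>)))" by (rule inv_unique)
    thus ?thesis by (simp add: U_def cconj_diff cconj_mult cconj_mat cconj_wm)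
  qed
  have uU: "unitary (U \<omega>)" for \<omega>
    unfolding U_def
    by (rule unitary_form[OF invKp cadj_wm]) (simp add: ww[OF assms(1)] Kp_herm[OF assms(2)])
  show ?thesis
  proof (intro conjI allI exI)
    fix \<omega> show "invertible (mat (\<i> * complex_of_real \<omega>) + Gamma_mat \<gamma> - M_IME G)"
      using main[of \<omega>] by (simp add: Xm_def)
  next
    fix \<omega> show "cadjoint L_mat ** S_IME \<gamma> G \<omega> ** L_mat = block_mat (U \<omega>) 0 0 (cconj (U (- \<omega>)))"
      using main[of \<omega>] by (simp add: cU U_def[of \<omega>] L_def La_def)
  next
    fix \<omega> show "unitary (U \<omega>)" by (rule uU)
  qed
qed

end
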